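(* Let $N,\ell$ be positive integers, let $E_1,\dots,E_N>0$ and $0<\kappa\le 1$, and set $g_j=\frac{\kappa E_j}{\sum_{i=1}^N E_i}$ for $j=1,\dots,N$. Let $\Phi\in\mathbb{R}^{\ell\times N}$ be a random matrix with independent entries, where $\Phi_{ij}=\sqrt{1/g_j}$ with probability $g_j/2$, $\Phi_{ij}=0$ with probability $1-g_j$, and $\Phi_{ij}=-\sqrt{1/g_j}$ with probability $g_j/2$. For vectors $u,v\in\mathbb{R}^N$ define $x=\frac{1}{\sqrt{\ell}}\Phi u$ and $y=\frac{1}{\sqrt{\ell}}\Phi v\in\mathbb{R}^\ell$. Then $$\mathbb{E}[x^Ty]=u^Tv$$ and $$\mathrm{Var}(x^Ty)=\frac{1}{\ell}\Big((u^Tv)^2+\|u\|_2^2\|v\|_2^2+\sum_{j=1}^N\frac{1}{g_j}u_j^2v_j^2-3\sum_{j=1}^N u_j^2v_j^2\Big).$$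
   Context: $E_j$ is the energy harvested by sensor node $j$ and $\kappa$ is a sampling parameter; $g_j$ is the probability that entry $(i,j)$ of the projection matrix is nonzero. *)

theory Defs
  imports "HOL-Probability.Probability"
begin

definition entry_pmf :: "real \<Rightarrow> real pmf" where
  "entry_pmf g = pmf_of_list [(sqrt (1 / g), g / 2), (0, 1 - g), (- sqrt (1 / g), g / 2)]"

text \<open>g_j = kappa E_j / sum_i E_i, indices 0-based: j < N.\<close>
definition gprob :: "nat \<Rightarrow> (nat \<Rightarrow> real) \<Rightarrow> real \<Rightarrow> nat \<Rightarrow> real" where
  "gprob N E \<kappa> j = \<kappa> * E j / (\<Sum>i<N. E i)"

text \<open>The random l x N matrix Phi with independent entries, as a function on index pairs
  (i,j) with i < l, j < N (value 0 outside).\<close>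
definition Phi_pmf :: "nat \<Rightarrow> nat \<Rightarrow> (nat \<Rightarrow> real) \<Rightarrow> real \<Rightarrow> (nat \<times> nat \<Rightarrow> real) pmf" where
  "Phi_pmf l N E \<kappa> = Pi_pmf ({..<l} \<times> {..<N}) 0 (\<lambda>(i, j). entry_pmf (gprob N E \<kappa> j))"

definition proj :: "nat \<Rightarrow> nat \<Rightarrow> (nat \<times> nat \<Rightarrow> real) \<Rightarrow> (nat \<Rightarrow> real) \<Rightarrow> nat \<Rightarrow> real" where
  "proj l N \<Phi> u i = (1 / sqrt (real l)) * (\<Sum>j<N. \<Phi> (i, j) * u j)"

end

theory Submission
  imports Defs
begin


lemma entry_wf: "0 < g \<Longrightarrow> g \<le> 1 \<Longrightarrow>
  pmf_of_list_wf [(sqrt (1 / g), g / 2), (0, 1 - g), (- sqrt (1 / g), g / 2)]"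
  by (rule pmf_of_list_wfI) auto

lemma entry_set: "0 < g \<Longrightarrow> g \<le> 1 \<Longrightarrow> set_pmf (entry_pmf g) \<subseteq> {sqrt (1/g), 0, - sqrt (1/g)}"
  unfolding entry_pmf_def using set_pmf_of_list[OF entry_wf] by auto

lemma entry_finite: "0 < g \<Longrightarrow> g \<le> 1 \<Longrightarrow> finite (set_pmf (entry_pmf g))"
  using entry_set finite_subset by blast

lemma entry_exp:
  assumes g: "0 < g" "g \<le> 1"
  shows "measure_pmf.expectation (entry_pmf g) f =
     g/2 * f (sqrt (1/g)) + (1-g) * f 0 + g/2 * f (- sqrt (1/g))"
proof -
  define s where "s = sqrt (1/g)"
  have s: "s > 0" using g by (simp add: s_def)
  have "measure_pmf.expectation (entry_pmf g) f = (\<Sum>a\<in>{s,0,-s}. f a * pmf (entry_pmf g) a)"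
    by (rule integral_measure_pmf_real) (use entry_set[OF g] s_def in auto)
  also have "\<dots> = f s * (g/2) + f 0 * (1-g) + f (-s) * (g/2)"
  proof -
    have wf: "pmf_of_list_wf [(s, g / 2), (0, 1 - g), (- s, g / 2)]"
      using entry_wf[OF g] by (simp add: s_def)
    show ?thesis
    using s unfolding entry_pmf_def s_def[symmetric]
    by (simp add: pmf_pmf_of_list[OF wf])
  qed
  finally show ?thesis by (simp add: s_def algebra_simps)
qed

lemma entry_mom:
  assumes g: "0 < g" "g \<le> 1"
  shows "measure_pmf.expectation (entry_pmf g) (\<lambda>x. x ^ k) =
     (if k = 0 then 1 else if odd k then 0 else g * (1/g) ^ (k div 2))"
proof -
  define s where "s = sqrt (1/g)"
  have s2: "s^2 = 1/g" using g by (simp add: s_def)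
  show ?thesis
  proof (cases "k = 0")
    case True thus ?thesis using entry_exp[OF g, of "\<lambda>x. x^k"] by simp
  next
    case False
    show ?thesis
    proof (cases "odd k")
      case True thus ?thesis using False entry_exp[OF g, of "\<lambda>x. x^k"] by (simp add: s_def[symmetric])
    next
      case ev: False
      then obtain m where k: "k = 2*m" by (auto elim: evenE)
      have "s ^ k = (1/g)^m" by (simp add: k power_mult s2)
      thus ?thesis using False ev entry_exp[OF g, of "\<lambda>x. x^k"] k by (simp add: s_def[symmetric])
    qed
  qed
qed

lemma exp_pair_mult:
  fixes h :: "'a \<Rightarrow> real" and k :: "'b \<Rightarrow> real"
  assumes "finite (set_pmf P)" "finite (set_pmf Q)"
  shows "measure_pmf.expectation (pair_pmf P Q) (\<lambda>x. h (fst x) * k (snd x)) =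
         measure_pmf.expectation P h * measure_pmf.expectation Q k"
proof -
  have "measure_pmf.expectation (pair_pmf P Q) (\<lambda>x. h (fst x) * k (snd x)) =
     (\<Sum>x\<in>set_pmf P \<times> set_pmf Q. h (fst x) * k (snd x) * pmf (pair_pmf P Q) x)"
    by (rule integral_measure_pmf_real) (use assms in auto)
  also have "\<dots> = (\<Sum>a\<in>set_pmf P. \<Sum>b\<in>set_pmf Q. (h a * pmf P a) * (k b * pmf Q b))"
    by (subst sum.cartesian_product) (intro sum.cong refl, auto simp: pmf_pair)
  also have "\<dots> = (\<Sum>a\<in>set_pmf P. h a * pmf P a) * (\<Sum>b\<in>set_pmf Q. k b * pmf Q b)"
    by (simp add: sum_product)
  also have "\<dots> = measure_pmf.expectation P h * measure_pmf.expectation Q k"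
    by (subst (1 2) integral_measure_pmf_real) (use assms in auto)
  finally show ?thesis .
qed

lemma exp_prod_Pi:
  fixes f :: "'a \<Rightarrow> 'b \<Rightarrow> real"
  assumes "finite A" "\<And>x. x \<in> A \<Longrightarrow> finite (set_pmf (p x))"
  shows "measure_pmf.expectation (Pi_pmf A dflt p) (\<lambda>y. \<Prod>x\<in>A. f x (y x)) =
         (\<Prod>x\<in>A. measure_pmf.expectation (p x) (f x))"
  using assms
proof (induction A rule: finite_induct)
  case empty thus ?case by simp
next
  case (insert x A)
  have fin: "finite (set_pmf (Pi_pmf A dflt p))"
    using insert by (subst set_Pi_pmf) (auto intro!: finite_PiE_dflt)
  have "measure_pmf.expectation (Pi_pmf (insert x A) dflt p) (\<lambda>y. \<Prod>z\<in>insert x A. f z (y z))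
     = measure_pmf.expectation (pair_pmf (p x) (Pi_pmf A dflt p))
          (\<lambda>yf. f x (fst yf) * (\<Prod>z\<in>A. f z (snd yf z)))"
    using insert.hyps
    by (simp add: Pi_pmf_insert case_prod_unfold)
       (intro Bochner_Integration.integral_cong refl arg_cong2[where f="(*)"] prod.cong, auto)
  also have "\<dots> = measure_pmf.expectation (p x) (f x) *
       measure_pmf.expectation (Pi_pmf A dflt p) (\<lambda>y. \<Prod>z\<in>A. f z (y z))"
    by (rule exp_pair_mult[of _ _ "f x" "\<lambda>y. \<Prod>z\<in>A. f z (y z)"]) (use insert fin in auto)
  also have "\<dots> = (\<Prod>z\<in>insert x A. measure_pmf.expectation (p z) (f z))"
    using insert by simp
  finally show ?case .
qed

lemma prod_list_count:
  assumes "finite D" "set xs \<subseteq> D"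
  shows "prod_list (map \<Phi> xs) = (\<Prod>p\<in>D. (\<Phi> p :: real) ^ count_list xs p)"
  using assms(2)
proof (induction xs)
  case Nil thus ?case by simp
next
  case (Cons a xs)
  have "(\<Prod>p\<in>D. \<Phi> p ^ count_list (a # xs) p) = (\<Prod>p\<in>D. (if p = a then \<Phi> p else 1) * \<Phi> p ^ count_list xs p)"
    by (intro prod.cong) auto
  also have "\<dots> = (\<Prod>p\<in>D. (if p = a then \<Phi> p else 1)) * (\<Prod>p\<in>D. \<Phi> p ^ count_list xs p)"
    by (rule prod.distrib)
  also have "(\<Prod>p\<in>D. (if p = a then \<Phi> p else 1)) = \<Phi> a"
    using Cons.prems assms(1) by (simp add: prod.delta)
  finally show ?case using Cons by simp
qed


definition M :: "real \<Rightarrow> nat \<Rightarrow> real" where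
  "M g k = (if k = 0 then 1 else if odd k then 0 else g * (1/g) ^ (k div 2))"

lemma mom_list:
  fixes G :: "nat \<Rightarrow> real" and l N :: nat
  assumes G: "\<forall>j<N. 0 < G j \<and> G j \<le> 1"
    and xs: "set xs \<subseteq> {..<l} \<times> {..<N}"
  shows "measure_pmf.expectation (Pi_pmf ({..<l} \<times> {..<N}) 0 (\<lambda>(i, j). entry_pmf (G j)))
           (\<lambda>\<Phi>. prod_list (map \<Phi> xs)) =
         (\<Prod>p\<in>set xs. M (G (snd p)) (count_list xs p))"
proof -
  let ?D = "{..<l} \<times> {..<N}"
  have "measure_pmf.expectation (Pi_pmf ?D 0 (\<lambda>(i, j). entry_pmf (G j))) (\<lambda>\<Phi>. prod_list (map \<Phi> xs))
     = measure_pmf.expectation (Pi_pmf ?D 0 (\<lambda>(i, j). entry_pmf (G j)))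
         (\<lambda>\<Phi>. \<Prod>p\<in>?D. (\<lambda>p x. x ^ count_list xs p) p (\<Phi> p))"
    by (intro Bochner_Integration.integral_cong refl, rule prod_list_count) (use xs in auto)
  also have "\<dots> = (\<Prod>p\<in>?D. measure_pmf.expectation ((\<lambda>(i, j). entry_pmf (G j)) p) (\<lambda>x. x ^ count_list xs p))"
    by (rule exp_prod_Pi) (use G entry_finite in auto)
  also have "\<dots> = (\<Prod>p\<in>?D. M (G (snd p)) (count_list xs p))"
    by (intro prod.cong refl) (use G entry_mom in \<open>auto simp: M_def\<close>)
  also have "\<dots> = (\<Prod>p\<in>set xs. M (G (snd p)) (count_list xs p))"
    by (rule prod.mono_neutral_right) (use xs in \<open>auto simp: M_def count_list_0_iff\<close>)
  finally show ?thesis .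
qed

lemma prod2: "0 < G (snd a) \<Longrightarrow> 0 < G (snd b) \<Longrightarrow> (\<Prod>p\<in>set [a, b]. M (G (snd p)) (count_list [a, b] p)) = (if a = b then 1 else 0)"
  by (cases "a = b") (simp_all, simp_all add: M_def)
lemma prod4: "0 < G (snd a) \<Longrightarrow> 0 < G (snd b) \<Longrightarrow> 0 < G (snd c) \<Longrightarrow> 0 < G (snd d) \<Longrightarrow> (\<Prod>p\<in>set [a, b, c, d]. M (G (snd p)) (count_list [a, b, c, d] p)) =
     (if a = b \<and> c = d then 1 else 0) + (if a = c \<and> b = d then 1 else 0) + (if a = d \<and> b = c then 1 else 0)
     + (if a = b \<and> a = c \<and> a = d then 1 / G (snd a) - 3 else 0)"
  by (cases "a = b"; cases "a = c"; cases "a = d"; cases "b = c"; cases "b = d"; cases "c = d")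
     (simp_all add: insert_commute, simp_all add: M_def power2_eq_square)

lemma mom2:
  fixes G :: "nat \<Rightarrow> real" and l N :: nat
  assumes G: "\<forall>j<N. 0 < G j \<and> G j \<le> 1"
    and ab: "a \<in> {..<l} \<times> {..<N}" "b \<in> {..<l} \<times> {..<N}"
  shows "measure_pmf.expectation (Pi_pmf ({..<l} \<times> {..<N}) 0 (\<lambda>(i, j). entry_pmf (G j)))
           (\<lambda>\<Phi>. \<Phi> a * \<Phi> b) = (if a = b then 1 else 0)"
proof -
  have g: "G (snd a) > 0" and gb: "G (snd b) > 0" using G ab by auto
  have sub: "set [a,b] \<subseteq> {..<l} \<times> {..<N}" using ab by auto
  have e: "(\<lambda>\<Phi>. \<Phi> a * \<Phi> b) = (\<lambda>\<Phi>. prod_list (map \<Phi> [a,b]))"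
    by simp
  show ?thesis unfolding e mom_list[OF G sub] prod2[where G=G and a=a and b=b, OF g gb] ..
qed

lemma mom4:
  fixes G :: "nat \<Rightarrow> real" and l N :: nat
  assumes G: "\<forall>j<N. 0 < G j \<and> G j \<le> 1"
    and ab: "a \<in> {..<l} \<times> {..<N}" "b \<in> {..<l} \<times> {..<N}" "c \<in> {..<l} \<times> {..<N}" "d \<in> {..<l} \<times> {..<N}"
  shows "measure_pmf.expectation (Pi_pmf ({..<l} \<times> {..<N}) 0 (\<lambda>(i, j). entry_pmf (G j)))
           (\<lambda>\<Phi>. \<Phi> a * \<Phi> b * \<Phi> c * \<Phi> d) =
     (if a = b \<and> c = d then 1 else 0) + (if a = c \<and> b = d then 1 else 0) + (if a = d \<and> b = c then 1 else 0)
     + (if a = b \<and> a = c \<and> a = d then 1 / G (snd a) - 3 else 0)"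
proof -
  have g: "G (snd a) > 0" and gb: "G (snd b) > 0" and gc: "G (snd c) > 0" and gd: "G (snd d) > 0"
    using G ab by auto
  have sub: "set [a,b,c,d] \<subseteq> {..<l} \<times> {..<N}" using ab by auto
  have e: "(\<lambda>\<Phi>. \<Phi> a * \<Phi> b * \<Phi> c * \<Phi> d) = (\<lambda>\<Phi>. prod_list (map \<Phi> [a,b,c,d]))"
    by (simp add: mult.assoc)
  show ?thesis unfolding e mom_list[OF G sub] prod4[where G=G and a=a and b=b and c=c and d=d, OF g gb gc gd] ..
qed

lemma Fpt: "(if (i, j) = (i, k) \<and> (i', m) = (i', n) then 1 else 0) + (if (i, j) = (i', m) \<and> (i, k) = (i', n) then 1 else 0) +
    (if (i, j) = (i', n) \<and> (i, k) = (i', m) then 1 else 0) +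
    (if (i, j) = (i, k) \<and> (i, j) = (i', m) \<and> (i, j) = (i', n) then 1 / G (snd (i, j)) - 3 else 0) =
    (if j = k \<and> m = n then 1 else 0) + (if i = i' \<and> j = m \<and> k = n then 1 else 0)
     + (if i = i' \<and> j = n \<and> k = m then 1 else 0) + (if i = i' \<and> j = k \<and> j = m \<and> j = n then 1 / G j - 3 else (0::real))"
  by (intro arg_cong2[where f="(+)"] if_cong refl) auto

lemma mom4p:
  fixes G :: "nat \<Rightarrow> real" and l N :: nat
  assumes G: "\<forall>j<N. 0 < G j \<and> G j \<le> 1"
    and idx: "i < l" "i' < l" "j < N" "k < N" "m < N" "n < N"
  shows "measure_pmf.expectation (Pi_pmf ({..<l} \<times> {..<N}) 0 (\<lambda>(i, j). entry_pmf (G j)))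
           (\<lambda>\<Phi>. \<Phi> (i,j) * \<Phi> (i,k) * \<Phi> (i',m) * \<Phi> (i',n)) =
    (if j = k \<and> m = n then 1 else 0) + (if i = i' \<and> j = m \<and> k = n then 1 else 0)
     + (if i = i' \<and> j = n \<and> k = m then 1 else 0) + (if i = i' \<and> j = k \<and> j = m \<and> j = n then 1 / G j - 3 else (0::real))"
  using mom4[OF G, where a="(i,j)" and b="(i,k)" and c="(i',m)" and d="(i',n)"] idx
  unfolding Fpt by simp




lemma if_conj0: "(if A \<and> B then x else (0::real)) = (if A then if B then x else 0 else 0)" by simp
lemma sum_if_out: "(\<Sum>x\<in>S. if P then f x else (0::real)) = (if P then sum f S else 0)" by simp

lemmas sumsimps = if_distrib[where f="\<lambda>x. _ * x"] if_conj0 sum_if_out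

context fixes l N :: nat and u v w :: "nat \<Rightarrow> real" begin
lemma s1: "(\<Sum>i<l. \<Sum>i'<l. \<Sum>j<N. \<Sum>m<N. \<Sum>k<N. \<Sum>n<N.
   (u j * v k * u m * v n :: real) * (if j = k \<and> m = n then 1 else 0)) = real l ^ 2 * (\<Sum>j<N. u j * v j)^2"
  by (simp add: sumsimps power2_eq_square sum_distrib_left sum_distrib_right mult_ac cong: if_cong)

lemma s2: "(\<Sum>i<l. \<Sum>i'<l. \<Sum>j<N. \<Sum>m<N. \<Sum>k<N. \<Sum>n<N.
   (u j * v k * u m * v n :: real) * (if i = i' \<and> j = m \<and> k = n then 1 else 0)) = real l * ((\<Sum>j<N. (u j)^2) * (\<Sum>j<N. (v j)^2))"
  by (simp add: sumsimps power2_eq_square sum_distrib_left sum_distrib_right mult_ac cong: if_cong) (rule sum.swap)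

lemma s3: "(\<Sum>i<l. \<Sum>i'<l. \<Sum>j<N. \<Sum>m<N. \<Sum>k<N. \<Sum>n<N.
   (u j * v k * u m * v n :: real) * (if i = i' \<and> j = n \<and> k = m then 1 else 0)) = real l * (\<Sum>j<N. u j * v j)^2"
  by (simp add: sumsimps power2_eq_square sum_distrib_left sum_distrib_right mult_ac cong: if_cong)

lemma s4: "(\<Sum>i<l. \<Sum>i'<l. \<Sum>j<N. \<Sum>m<N. \<Sum>k<N. \<Sum>n<N.
   (u j * v k * u m * v n :: real) * (if i = i' \<and> j = k \<and> j = m \<and> j = n then w j else 0)) = real l * (\<Sum>j<N. w j * (u j)^2 * (v j)^2)"
  by (simp add: sumsimps power2_eq_square sum_distrib_left sum_distrib_right mult_ac cong: if_cong)
end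

theorem proposition1:
  fixes N l :: nat and E u v :: "nat \<Rightarrow> real" and \<kappa> :: real
  assumes "N > 0" and "l > 0"
    and "\<And>j. j < N \<Longrightarrow> E j > 0"
    and "0 < \<kappa>" and "\<kappa> \<le> 1"
  defines "g \<equiv> gprob N E \<kappa>"
    and "XY \<equiv> (\<lambda>\<Phi>. \<Sum>i<l. proj l N \<Phi> u i * proj l N \<Phi> v i)"
  shows "measure_pmf.expectation (Phi_pmf l N E \<kappa>) XY = (\<Sum>j<N. u j * v j) \<and>
         measure_pmf.variance (Phi_pmf l N E \<kappa>) XY =
           (1 / real l) * ((\<Sum>j<N. u j * v j)\<^sup>2
                           + (\<Sum>j<N. (u j)\<^sup>2) * (\<Sum>j<N. (v j)\<^sup>2)
                           + (\<Sum>j<N. (1 / g j) * (u j)\<^sup>2 * (v j)\<^sup>2)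
                           - 3 * (\<Sum>j<N. (u j)\<^sup>2 * (v j)\<^sup>2))"
proof -
  let ?D = "{..<l} \<times> {..<N}"
  let ?Q = "Pi_pmf ?D 0 (\<lambda>(i, j). entry_pmf (g j))"
  have gpos: "\<forall>j<N. 0 < g j \<and> g j \<le> 1"
  proof (intro allI impI conjI)
    fix j assume j: "j < N"
    have Epos: "\<And>i. i < N \<Longrightarrow> E i > 0" using assms(3) .
    have Ej: "E j \<le> (\<Sum>i<N. E i)"
      using j Epos by (intro member_le_sum) (auto intro: less_imp_le)
    have S: "(\<Sum>i<N. E i) > 0" using Ej Epos[OF j] by linarith
    show "0 < g j" unfolding g_def gprob_def using S Epos[OF j] assms(4) by simp
    have "\<kappa> * E j \<le> 1 * (\<Sum>i<N. E i)"
      using Ej assms(5) Epos[OF j] by (intro mult_mono) auto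
    thus "g j \<le> 1" unfolding g_def gprob_def using S by (simp add: divide_le_eq_1)
  qed
  have P: "Phi_pmf l N E \<kappa> = ?Q" by (simp add: Phi_pmf_def g_def)
  have fin: "finite (set_pmf ?Q)"
    by (subst set_Pi_pmf) (use gpos entry_finite in auto)
  have int[simp]: "integrable (measure_pmf ?Q) f" for f :: "_ \<Rightarrow> real"
    by (rule integrable_measure_pmf_finite[OF fin])
  have lpos: "real l > 0" using assms(2) by simp
  have XY_eq: "XY = (\<lambda>\<Phi>. (1/real l) * (\<Sum>i<l. \<Sum>j<N. \<Sum>k<N. u j * v k * (\<Phi> (i,j) * \<Phi> (i,k))))"
  proof
    fix \<Phi> :: "nat \<times> nat \<Rightarrow> real"
    have sq: "(1 / sqrt (real l)) * a * ((1 / sqrt (real l)) * b) = (1/real l) * (a * b)" for a b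
      using lpos by (simp add: field_simps)
    show "XY \<Phi> = (1/real l) * (\<Sum>i<l. \<Sum>j<N. \<Sum>k<N. u j * v k * (\<Phi> (i,j) * \<Phi> (i,k)))"
      unfolding XY_def proj_def sq by (simp only: sum_product) (simp add: sum_distrib_left mult_ac)
  qed
  have EXY: "measure_pmf.expectation ?Q XY = (\<Sum>j<N. u j * v j)"
  proof -
    have "measure_pmf.expectation ?Q XY = (1/real l) * (\<Sum>i<l. \<Sum>j<N. \<Sum>k<N. u j * v k *
            measure_pmf.expectation ?Q (\<lambda>\<Phi>. \<Phi> (i,j) * \<Phi> (i,k)))"
      unfolding XY_eq by (simp add: Bochner_Integration.integral_sum)
    also have "\<dots> = (1/real l) * (\<Sum>i<l. \<Sum>j<N. \<Sum>k<N. u j * v k * (if j = k then 1 else 0))"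
      by (intro arg_cong2[where f="(*)"] refl sum.cong) (simp add: mom2[OF gpos])
    also have "\<dots> = (\<Sum>j<N. u j * v j)"
      using lpos by (simp add: if_distrib[where f="\<lambda>x. _ * x"] cong: if_cong)
    finally show ?thesis .
  qed
  define w where "w j = 1 / g j - 3" for j
  define F where "F i i' j m k n = (if j = k \<and> m = n then 1 else 0) + (if i = i' \<and> j = m \<and> k = n then 1 else 0)
     + (if i = i' \<and> j = n \<and> k = m then 1 else 0) + (if i = i' \<and> j = k \<and> j = m \<and> j = n then w j else (0::real))"
    for i i' j m k n :: nat
  have sqr: "((1/real l) * a)^2 = (1/real l)^2 * (a * a)" for a by algebra
  have XY2: "(\<lambda>\<Phi>. (XY \<Phi>)^2) = (\<lambda>\<Phi>. (1/real l)^2 * (\<Sum>i<l. \<Sum>i'<l. \<Sum>j<N. \<Sum>m<N. \<Sum>k<N. \<Sum>n<N.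
      u j * v k * u m * v n * (\<Phi> (i,j) * \<Phi> (i,k) * \<Phi> (i',m) * \<Phi> (i',n))))"
    unfolding XY_eq sqr by (rule ext) (simp only: sum_product, simp add: mult_ac)
  have EXY2: "measure_pmf.expectation ?Q (\<lambda>\<Phi>. (XY \<Phi>)^2) = (1/real l)^2 * (\<Sum>i<l. \<Sum>i'<l. \<Sum>j<N. \<Sum>m<N. \<Sum>k<N. \<Sum>n<N.
      u j * v k * u m * v n * F i i' j m k n)"
  proof -
    have "measure_pmf.expectation ?Q (\<lambda>\<Phi>. (XY \<Phi>)^2) = (1/real l)^2 * (\<Sum>i<l. \<Sum>i'<l. \<Sum>j<N. \<Sum>m<N. \<Sum>k<N. \<Sum>n<N.
      u j * v k * u m * v n * measure_pmf.expectation ?Q (\<lambda>\<Phi>. \<Phi> (i,j) * \<Phi> (i,k) * \<Phi> (i',m) * \<Phi> (i',n)))"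
      unfolding XY2 by (simp add: Bochner_Integration.integral_sum)
    also have "\<dots> = (1/real l)^2 * (\<Sum>i<l. \<Sum>i'<l. \<Sum>j<N. \<Sum>m<N. \<Sum>k<N. \<Sum>n<N.
      u j * v k * u m * v n * F i i' j m k n)"
      by (intro arg_cong2[where f="(*)"] refl sum.cong) (simp only: mom4p[OF gpos] F_def w_def lessThan_iff)
    finally show ?thesis .
  qed
  have split: "(\<Sum>i<l. \<Sum>i'<l. \<Sum>j<N. \<Sum>m<N. \<Sum>k<N. \<Sum>n<N. u j * v k * u m * v n * F i i' j m k n)
     = (\<Sum>i<l. \<Sum>i'<l. \<Sum>j<N. \<Sum>m<N. \<Sum>k<N. \<Sum>n<N. (u j * v k * u m * v n :: real) * (if j = k \<and> m = n then 1 else 0))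
     + (\<Sum>i<l. \<Sum>i'<l. \<Sum>j<N. \<Sum>m<N. \<Sum>k<N. \<Sum>n<N. (u j * v k * u m * v n :: real) * (if i = i' \<and> j = m \<and> k = n then 1 else 0))
     + (\<Sum>i<l. \<Sum>i'<l. \<Sum>j<N. \<Sum>m<N. \<Sum>k<N. \<Sum>n<N. (u j * v k * u m * v n :: real) * (if i = i' \<and> j = n \<and> k = m then 1 else 0))
     + (\<Sum>i<l. \<Sum>i'<l. \<Sum>j<N. \<Sum>m<N. \<Sum>k<N. \<Sum>n<N. (u j * v k * u m * v n :: real) * (if i = i' \<and> j = k \<and> j = m \<and> j = n then w j else 0))"
    unfolding F_def by (simp only: distrib_left sum.distrib)
  have EXY2': "measure_pmf.expectation ?Q (\<lambda>\<Phi>. (XY \<Phi>)^2) = (1/real l)^2 *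
     (real l ^ 2 * (\<Sum>j<N. u j * v j)^2 + real l * ((\<Sum>j<N. (u j)^2) * (\<Sum>j<N. (v j)^2))
      + real l * (\<Sum>j<N. u j * v j)^2 + real l * (\<Sum>j<N. w j * (u j)^2 * (v j)^2))"
    unfolding EXY2 split s1 s2 s3 s4 ..
  have V: "measure_pmf.variance ?Q XY = measure_pmf.expectation ?Q (\<lambda>\<Phi>. (XY \<Phi>)^2) - (measure_pmf.expectation ?Q XY)^2"
    by (rule measure_pmf.variance_eq) simp_all
  have wsum: "(\<Sum>j<N. w j * (u j)^2 * (v j)^2) = (\<Sum>j<N. (1 / g j) * (u j)\<^sup>2 * (v j)\<^sup>2) - 3 * (\<Sum>j<N. (u j)\<^sup>2 * (v j)\<^sup>2)"
    unfolding w_def by (simp add: algebra_simps sum_subtractf sum_distrib_left)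
  have Vval: "measure_pmf.variance ?Q XY = (1/real l)^2 *
     (real l ^ 2 * (\<Sum>j<N. u j * v j)^2 + real l * ((\<Sum>j<N. (u j)^2) * (\<Sum>j<N. (v j)^2))
      + real l * (\<Sum>j<N. u j * v j)^2 + real l * (\<Sum>j<N. w j * (u j)^2 * (v j)^2)) - (\<Sum>j<N. u j * v j)^2"
    by (subst V, subst EXY2', subst EXY) (rule refl)
  show ?thesis
    unfolding P
  proof (rule conjI)
    show "measure_pmf.expectation ?Q XY = (\<Sum>j<N. u j * v j)" by (rule EXY)
    show "measure_pmf.variance ?Q XY = (1 / real l) * ((\<Sum>j<N. u j * v j)\<^sup>2
                           + (\<Sum>j<N. (u j)\<^sup>2) * (\<Sum>j<N. (v j)\<^sup>2)
                           + (\<Sum>j<N. (1 / g j) * (u j)\<^sup>2 * (v j)\<^sup>2)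
                           - 3 * (\<Sum>j<N. (u j)\<^sup>2 * (v j)\<^sup>2))"
    proof -
      have G: "(\<Sum>j<N. (1 / g j) * (u j)\<^sup>2 * (v j)\<^sup>2) = (\<Sum>j<N. w j * (u j)^2 * (v j)^2) + 3 * (\<Sum>j<N. (u j)\<^sup>2 * (v j)\<^sup>2)"
        using wsum by simp
      show ?thesis unfolding Vval G using lpos by (simp add: field_simps power2_eq_square)
    qed
  qed
qed


end
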